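(* Let $G$ be a graph with minimum degree $\delta(G)\ge 2$ and $\mu(G)\le\delta(G)-1$, and let $S,T$ be disjoint vertex sets such that $(S,T)$ realizes $\mu(G)$. Then $|S|\ge\delta(G)-1$, and if $|S|=\delta(G)-1$ then $\mu(G)=\delta(G)-1$.
   Context: All graphs are finite and simple; $\delta(G)$ is the minimum degree. For a graph $G=(V,E)$ on $n$ vertices, a fractional vertex cover is a function $f:V\to[0,\infty)$ with $f(u)+f(v)\ge 1$ for every edge $uv\in E$; $\tau^*(G)$ denotes the minimum of $\sum_{v\in V}f(v)$ over all fractional vertex covers. For $E'\subseteq E$ let $G-E'=(V,E\setminus E')$, and $\mu(G)=\min\{|E'| : E'\subseteq E,\ \tau^*(G-E')<n/2\}$. For disjoint $S,T\subseteq V$, $E_G(S;V\setminus T)$ is the set of edges with both endpoints in $S$ or with one endpoint in $S$ and the other in $V\setminus(S\cup T)$. It holds that $\mu(G)=\min|E_G(S;V\setminus T)|$ over disjoint $S,T$ with $|S|>|T|$; a pair $(S,T)$ of disjoint subsets with $|S|>|T|$ and $|E_G(S;V\setminus T)|=\mu(G)$ is said to realize $\mu(G)$. *)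

theory Defs
  imports Complex_Main
begin

definition simple_graph :: "'a set \<Rightarrow> 'a set set \<Rightarrow> bool" where
  "simple_graph V E \<longleftrightarrow> finite V \<and>
     (\<forall>e\<in>E. \<exists>u v. u \<in> V \<and> v \<in> V \<and> u \<noteq> v \<and> e = {u, v})"

definition degree :: "'a set set \<Rightarrow> 'a \<Rightarrow> nat" where
  "degree E v = card {e\<in>E. v \<in> e}"

definition min_degree :: "'a set \<Rightarrow> 'a set set \<Rightarrow> nat" where
  "min_degree V E = Min (degree E ` V)"

definition frac_vertex_cover :: "'a set \<Rightarrow> 'a set set \<Rightarrow> ('a \<Rightarrow> real) \<Rightarrow> bool" where
  "frac_vertex_cover V E f \<longleftrightarrow> (\<forall>v\<in>V. f v \<ge> 0) \<and>
     (\<forall>u v. {u, v} \<in> E \<longrightarrow> f u + f v \<ge> 1)"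

definition tau_star :: "'a set \<Rightarrow> 'a set set \<Rightarrow> real" where
  "tau_star V E = Inf {(\<Sum>v\<in>V. f v) | f. frac_vertex_cover V E f}"

definition mu :: "'a set \<Rightarrow> 'a set set \<Rightarrow> nat" where
  "mu V E = (LEAST k. \<exists>E'. E' \<subseteq> E \<and> card E' = k \<and>
                   tau_star V (E - E') < real (card V) / 2)"

definition edges_ST :: "'a set \<Rightarrow> 'a set set \<Rightarrow> 'a set \<Rightarrow> 'a set \<Rightarrow> 'a set set" where
  "edges_ST V E S T = {e\<in>E. e \<subseteq> S \<or>
       (\<exists>u w. e = {u, w} \<and> u \<in> S \<and> w \<in> V - (S \<union> T))}"

definition realizes_mu :: "'a set \<Rightarrow> 'a set set \<Rightarrow> 'a set \<Rightarrow> 'a set \<Rightarrow> bool" where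
  "realizes_mu V E S T \<longleftrightarrow> S \<subseteq> V \<and> T \<subseteq> V \<and> S \<inter> T = {} \<and>
     card S > card T \<and> card (edges_ST V E S T) = mu V E"

end

theory Submission
  imports Defs
begin

lemma edgeD:
  assumes "simple_graph V E" "e \<in> E"
  obtains u v where "u \<in> V" "v \<in> V" "u \<noteq> v" "e = {u, v}"
  using assms unfolding simple_graph_def by meson

lemma fin_E:
  assumes "simple_graph V E" shows "finite E"
proof -
  have "E \<subseteq> Pow V"
  proof
    fix e assume "e \<in> E"
    then obtain u v where "u \<in> V" "v \<in> V" "e = {u, v}" using edgeD[OF assms] by metis
    then show "e \<in> Pow V" by simp
  qed
  moreover have "finite (Pow V)" using assms unfolding simple_graph_def by simp
  ultimately show ?thesis by (rule finite_subset)
qed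

lemma deg_bound:
  assumes G: "simple_graph V E" and v: "v \<in> S" and SV: "S \<subseteq> V" and fT: "finite T"
  shows "min_degree V E \<le> card {e\<in>edges_ST V E S T. v \<in> e} + card T"
proof -
  have fE: "finite E" using fin_E[OF G] .
  have vV: "v \<in> V" using v SV by blast
  have fV: "finite V" using G unfolding simple_graph_def by simp
  have "min_degree V E \<le> degree E v"
    unfolding min_degree_def using fV vV by simp
  also have "degree E v \<le> card ({e\<in>edges_ST V E S T. v \<in> e} \<union> (\<lambda>w. {v,w}) ` T)"
    unfolding degree_def
  proof (rule card_mono)
    show "finite ({e \<in> edges_ST V E S T. v \<in> e} \<union> (\<lambda>w. {v, w}) ` T)"
      using fE fT unfolding edges_ST_def by auto
    show "{e \<in> E. v \<in> e} \<subseteq> {e \<in> edges_ST V E S T. v \<in> e} \<union> (\<lambda>w. {v, w}) ` T"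
    proof
      fix e assume e: "e \<in> {e \<in> E. v \<in> e}"
      then have eE: "e \<in> E" by simp
      then obtain a b where ab: "a \<in> V" "b \<in> V" "a \<noteq> b" "e = {a,b}"
        using edgeD[OF G] by metis
      obtain w where w: "e = {v,w}" "w \<in> V" using ab e by auto
      show "e \<in> {e \<in> edges_ST V E S T. v \<in> e} \<union> (\<lambda>w. {v, w}) ` T"
      proof (cases "w \<in> T")
        case True then show ?thesis using w by auto
      next
        case False
        then have "e \<subseteq> S \<or> (\<exists>u x. e = {u, x} \<and> u \<in> S \<and> x \<in> V - (S \<union> T))"
          using w v by blast
        then show ?thesis using eE w unfolding edges_ST_def by auto
      qed
    qed
  qed
  also have "\<dots> \<le> card {e\<in>edges_ST V E S T. v \<in> e} + card ((\<lambda>w. {v,w}) ` T)"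
    by (rule card_Un_le)
  also have "card ((\<lambda>w. {v,w}) ` T) \<le> card T" using fT by (rule card_image_le)
  finally show ?thesis by simp
qed

lemma double_count:
  assumes G: "simple_graph V E" and fS: "finite S"
  shows "(\<Sum>v\<in>S. card {e\<in>edges_ST V E S T. v \<in> e}) \<le> 2 * card (edges_ST V E S T)"
proof -
  let ?F = "edges_ST V E S T"
  have fF: "finite ?F" using fin_E[OF G] unfolding edges_ST_def by auto
  have "(\<Sum>v\<in>S. card {e\<in>?F. v \<in> e}) = (\<Sum>v\<in>S. \<Sum>e\<in>?F. (if v \<in> e then 1 else 0::nat))"
    using fF by (simp add: sum.If_cases Int_def)
  also have "\<dots> = (\<Sum>e\<in>?F. \<Sum>v\<in>S. (if v \<in> e then 1 else 0::nat))"
    by (rule sum.swap)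
  also have "\<dots> = (\<Sum>e\<in>?F. card (S \<inter> e))"
    using fS by (simp add: sum.If_cases Int_def conj_commute)
  also have "\<dots> \<le> (\<Sum>e\<in>?F. 2)"
  proof (rule sum_mono)
    fix e assume "e \<in> ?F"
    then have "e \<in> E" unfolding edges_ST_def by auto
    then obtain a b where "e = {a,b}" using edgeD[OF G] by metis
    then have "card e \<le> 2" by (simp add: card_insert_if)
    moreover have "card (S \<inter> e) \<le> card e" using \<open>e = {a,b}\<close> by (intro card_mono) auto
    ultimately show "card (S \<inter> e) \<le> 2" by simp
  qed
  finally show ?thesis by simp
qed

theorem lemma24:
  fixes V :: "'a set" and E :: "'a set set" and S T :: "'a set"
  assumes "simple_graph V E"
    and "V \<noteq> {}"
    and "min_degree V E \<ge> 2"
    and "mu V E \<le> min_degree V E - 1"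
    and "realizes_mu V E S T"
  shows "card S \<ge> min_degree V E - 1 \<and>
         (card S = min_degree V E - 1 \<longrightarrow> mu V E = min_degree V E - 1)"
proof -
  define F where "F = edges_ST V E S T"
  define d where "d = min_degree V E"
  define m where "m = card F"
  define s where "s = card S"
  define t where "t = card T"
  have G: "simple_graph V E" by fact
  have SV: "S \<subseteq> V" and TV: "T \<subseteq> V" and ts: "t < s" and mu: "mu V E = m"
    using assms(5) unfolding realizes_mu_def F_def m_def s_def t_def by auto
  have fV: "finite V" using G unfolding simple_graph_def by simp
  have fS: "finite S" and fT: "finite T" using SV TV fV finite_subset by auto
  have md: "m \<le> d - 1" using assms(4) mu d_def by simp
  have d2: "d \<ge> 2" using assms(3) d_def by simp
  have fF: "finite F" using fin_E[OF G] unfolding F_def edges_ST_def by auto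
  have av: "d \<le> card {e\<in>F. v \<in> e} + t" if "v \<in> S" for v
    using deg_bound[OF G that SV fT] unfolding d_def F_def t_def .
  have avm: "card {e\<in>F. v \<in> e} \<le> m" for v
    unfolding m_def using fF by (intro card_mono) auto
  have sum: "s * (d - t) \<le> 2 * m"
  proof -
    have "(\<Sum>v\<in>S. d - t) \<le> (\<Sum>v\<in>S. card {e\<in>F. v \<in> e})"
      by (rule sum_mono) (use av in force)
    also have "\<dots> \<le> 2 * m" using double_count[OF G fS, of T] unfolding F_def m_def .
    finally show ?thesis by (simp add: s_def)
  qed
  have s1: "s \<noteq> 1"
  proof
    assume "s = 1"
    then have "card S = 1" by (simp add: s_def)
    then obtain a where "S = {a}" by (rule card_1_singletonE)
    then have "t = 0" "d \<le> card {e\<in>F. a \<in> e} + t" using ts \<open>s = 1\<close> av by auto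
    then show False using avm[of a] md d2 by simp
  qed
  have s0: "s \<noteq> 0" using ts by simp
  have main: "s \<ge> d - 1 \<and> (s = d - 1 \<longrightarrow> m = d - 1)"
  proof (cases "s = 2")
    case True
    then have "card S = 2" by (simp add: s_def)
    then obtain a b where ab: "S = {a,b}" "a \<noteq> b" unfolding card_2_iff by blast
    have t1: "t \<le> 1" using ts True by simp
    have "card ({e\<in>F. a \<in> e} \<inter> {e\<in>F. b \<in> e}) \<le> card {{a,b}}"
    proof (rule card_mono)
      show "{e \<in> F. a \<in> e} \<inter> {e \<in> F. b \<in> e} \<subseteq> {{a, b}}"
      proof
        fix x assume x: "x \<in> {e \<in> F. a \<in> e} \<inter> {e \<in> F. b \<in> e}"
        then have "x \<in> E" unfolding F_def edges_ST_def by auto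
        then obtain u w where "x = {u, w}" using edgeD[OF G] by metis
        then show "x \<in> {{a, b}}" using x ab(2) by auto
      qed
    qed simp
    then have i1: "card ({e\<in>F. a \<in> e} \<inter> {e\<in>F. b \<in> e}) \<le> 1" by simp
    have "card ({e\<in>F. a \<in> e} \<union> {e\<in>F. b \<in> e}) + card ({e\<in>F. a \<in> e} \<inter> {e\<in>F. b \<in> e})
       = card {e\<in>F. a \<in> e} + card {e\<in>F. b \<in> e}"
      using fF by (intro card_Un_Int[symmetric]) auto
    moreover have "card ({e\<in>F. a \<in> e} \<union> {e\<in>F. b \<in> e}) \<le> m"
      unfolding m_def using fF by (intro card_mono) auto
    moreover have "d \<le> card {e\<in>F. a \<in> e} + t" "d \<le> card {e\<in>F. b \<in> e} + t"
      using av ab by auto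
    ultimately have "2 * d \<le> m + 1 + 2 * t" using i1 by linarith
    then have d3: "d \<le> 3" using md t1 by linarith
    have "2 * (d - t) \<le> 2 * m" using sum True by simp
    then have "d - 1 \<le> m" using t1 by linarith
    then show ?thesis using True d3 md by simp
  next
    case False
    then have s3: "s \<ge> 3" using s1 s0 by simp
    have A: "s * (d - s + 1) \<le> 2 * m" if sd: "s \<le> d"
    proof -
      have "d - s + 1 \<le> d - t" using ts sd by simp
      then have "s * (d - s + 1) \<le> s * (d - t)" by (rule mult_le_mono2)
      then show ?thesis using sum by simp
    qed
    show ?thesis
    proof (cases "s + 2 \<le> d")
      case True
      then obtain k where k: "d = s + 2 + k" using le_Suc_ex by (metis add.commute)
      have "d - s + 1 = k + 3" using k by simp
      then have "s * (d - s + 1) = s * (k + 3)" by (simp only:)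
      then have "s * k + 3 * s \<le> 2 * m" using A True by (simp add: algebra_simps)
      moreover have "2 * k + 2 < s * k + s"
      proof -
        have "(s - 2) * (k + 1) > 0" using s3 by simp
        then show ?thesis using s3 by (simp add: algebra_simps diff_mult_distrib)
      qed
      ultimately have "2 * m > 2 * (d - 1)" using k by simp
      then show ?thesis using md by simp
    next
      case False
      then have "s \<ge> d - 1" by simp
      moreover have "s = d - 1 \<longrightarrow> m = d - 1"
      proof
        assume e: "s = d - 1"
        then have "d - s + 1 = 2" using d2 by simp
        then have "s * 2 \<le> 2 * m" using A e d2 by simp
        then show "m = d - 1" using e md by simp
      qed
      ultimately show ?thesis by simp
    qed
  qed
  then show ?thesis using mu unfolding s_def d_def by simp
qed

end
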